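(* Let $G$ be a nilpotent $p$-group ($p$ prime) and let $G_0$ be the set of elements of $G$ of infinite height. Then $G_0$ is a normal subgroup of $G$, and the quotient group $G/G_0$ has no nontrivial elements of infinite height.
   Context: For a nilpotent $p$-group $G$, the height of $g\in G$ is the greatest integer $n\ge 0$ such that $g=h^{p^n}$ for some $h\in G$; if there is no greatest such $n$, $g$ is said to have infinite height. *)

theory Defs
  imports "HOL-Algebra.Algebra"
begin

definition lower_central_step :: "('a, 'b) monoid_scheme \<Rightarrow> 'a set \<Rightarrow> 'a set" where
  "lower_central_step G H = generate G
     {x \<otimes>\<^bsub>G\<^esub> y \<otimes>\<^bsub>G\<^esub> inv\<^bsub>G\<^esub> x \<otimes>\<^bsub>G\<^esub> inv\<^bsub>G\<^esub> y | x y. x \<in> H \<and> y \<in> carrier G}"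

definition nilpotent_group :: "('a, 'b) monoid_scheme \<Rightarrow> bool" where
  "nilpotent_group G \<longleftrightarrow> group G \<and>
     (\<exists>n. (lower_central_step G ^^ n) (carrier G) = {\<one>\<^bsub>G\<^esub>})"

text \<open>p-group: every element has order a power of p (G may be infinite).\<close>
definition p_group :: "('a, 'b) monoid_scheme \<Rightarrow> nat \<Rightarrow> bool" where
  "p_group G p \<longleftrightarrow> group G \<and> (\<forall>g\<in>carrier G. \<exists>k::nat. g [^]\<^bsub>G\<^esub> (p ^ k) = \<one>\<^bsub>G\<^esub>)"

definition infinite_height :: "('a, 'b) monoid_scheme \<Rightarrow> nat \<Rightarrow> 'a \<Rightarrow> bool" where
  "infinite_height G p g \<longleftrightarrow>
     \<not> (\<exists>n. (\<exists>h\<in>carrier G. g = h [^]\<^bsub>G\<^esub> (p ^ n)) \<and>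
            (\<forall>m. (\<exists>h\<in>carrier G. g = h [^]\<^bsub>G\<^esub> (p ^ m)) \<longrightarrow> m \<le> n))"

end

theory Submission
  imports Defs
begin

definition lcs :: "('a, 'b) monoid_scheme \<Rightarrow> nat \<Rightarrow> 'a set" where
  "lcs G k = (lower_central_step G ^^ k) (carrier G)"

definition cm :: "('a, 'b) monoid_scheme \<Rightarrow> 'a \<Rightarrow> 'a \<Rightarrow> 'a" where
  "cm G x y = x \<otimes>\<^bsub>G\<^esub> y \<otimes>\<^bsub>G\<^esub> inv\<^bsub>G\<^esub> x \<otimes>\<^bsub>G\<^esub> inv\<^bsub>G\<^esub> y"

definition gp :: "('a, 'b) monoid_scheme \<Rightarrow> nat \<Rightarrow> 'a set" where
  "gp G q = generate G {x [^]\<^bsub>G\<^esub> q | x. x \<in> carrier G}"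

lemma lcs_0: "lcs G 0 = carrier G" by (simp add: lcs_def)

lemma lcs_Suc: "lcs G (Suc k) = generate G {cm G x y | x y. x \<in> lcs G k \<and> y \<in> carrier G}"
  by (simp add: lcs_def lower_central_step_def cm_def)

context group begin

lemma cancel1 [simp]: "x \<in> carrier G \<Longrightarrow> y \<in> carrier G \<Longrightarrow> x \<otimes> (inv x \<otimes> y) = y"
  by (simp add: m_assoc[symmetric])
lemma cancel2 [simp]: "x \<in> carrier G \<Longrightarrow> y \<in> carrier G \<Longrightarrow> inv x \<otimes> (x \<otimes> y) = y"
  by (simp add: m_assoc[symmetric])

lemma cm_closed [simp]: "x \<in> carrier G \<Longrightarrow> y \<in> carrier G \<Longrightarrow> cm G x y \<in> carrier G"
  by (simp add: cm_def)

lemma cm_conj: assumes "g \<in> carrier G" "x \<in> carrier G" "y \<in> carrier G"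
  shows "g \<otimes> cm G x y \<otimes> inv g = cm G (g \<otimes> x \<otimes> inv g) (g \<otimes> y \<otimes> inv g)"
  using assms by (simp add: cm_def m_assoc inv_mult_group)

lemma gen_normal:
  assumes S: "S \<subseteq> carrier G" and cl: "\<And>g s. g \<in> carrier G \<Longrightarrow> s \<in> S \<Longrightarrow> g \<otimes> s \<otimes> inv g \<in> S"
  shows "generate G S \<lhd> G"
proof -
  have sg: "subgroup (generate G S) G" by (rule generate_is_subgroup[OF S])
  have "g \<otimes> h \<otimes> inv g \<in> generate G S" if g: "g \<in> carrier G" and h: "h \<in> generate G S" for g h
    using h
  proof induction
    case one then show ?case using g by (simp add: generate.one)
  next
    case (incl h) then show ?case using cl g by (simp add: generate.incl)
  next
    case (inv h)
    have hc: "h \<in> carrier G" using inv S by auto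
    have "g \<otimes> inv h \<otimes> inv g = inv (g \<otimes> h \<otimes> inv g)"
      using g hc by (simp add: inv_mult_group m_assoc)
    then show ?case using cl[OF g inv] by (simp add: generate.inv)
  next
    case (eng h1 h2)
    have c: "h1 \<in> carrier G" "h2 \<in> carrier G"
      using subgroup.mem_carrier[OF sg eng(1)] subgroup.mem_carrier[OF sg eng(2)] by auto
    have "g \<otimes> (h1 \<otimes> h2) \<otimes> inv g = (g \<otimes> h1 \<otimes> inv g) \<otimes> (g \<otimes> h2 \<otimes> inv g)"
      using g c by (simp add: m_assoc)
    then show ?case using eng by (simp add: generate.eng)
  qed
  then show ?thesis using sg by (simp add: normal_inv_iff)
qed

lemma lcs_normal: "lcs G k \<lhd> G"
proof (induction k)
  case 0 then show ?case by (simp add: lcs_0 normal_inv_iff subgroup_self)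
next
  case (Suc k)
  then interpret N: normal "lcs G k" G .
  have sub: "lcs G k \<subseteq> carrier G" by (simp add: N.subset)
  show ?case unfolding lcs_Suc
  proof (rule gen_normal)
    show "{cm G x y |x y. x \<in> lcs G k \<and> y \<in> carrier G} \<subseteq> carrier G" using sub by auto
  next
    fix g s assume g: "g \<in> carrier G" and s: "s \<in> {cm G x y |x y. x \<in> lcs G k \<and> y \<in> carrier G}"
    then obtain x y where xy: "s = cm G x y" "x \<in> lcs G k" "y \<in> carrier G" by auto
    have "g \<otimes> s \<otimes> inv g = cm G (g \<otimes> x \<otimes> inv g) (g \<otimes> y \<otimes> inv g)"
      using xy sub g cm_conj by auto
    moreover have "g \<otimes> x \<otimes> inv g \<in> lcs G k" using N.inv_op_closed2 g xy by auto
    ultimately show "g \<otimes> s \<otimes> inv g \<in> {cm G x y |x y. x \<in> lcs G k \<and> y \<in> carrier G}"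
      using g xy by auto
  qed
qed

lemma lcs_subgroup: "subgroup (lcs G k) G"
  by (rule normal_imp_subgroup[OF lcs_normal])

lemma lcs_sub: "lcs G k \<subseteq> carrier G"
  by (rule subgroup.subset[OF lcs_subgroup])

lemma cm_in: "x \<in> lcs G k \<Longrightarrow> y \<in> carrier G \<Longrightarrow> cm G x y \<in> lcs G (Suc k)"
  unfolding lcs_Suc by (rule generate.incl) auto

lemma rcos_eq_iff:
  assumes "subgroup H G" "x \<in> carrier G" "y \<in> carrier G"
  shows "(H #> x = H #> y) \<longleftrightarrow> x \<otimes> inv y \<in> H"
proof
  assume "H #> x = H #> y"
  then have "x \<in> H #> y" using rcos_self[OF assms(2,1)] by simp
  then show "x \<otimes> inv y \<in> H" using subgroup.rcos_module_imp[OF assms(1) is_group assms(3)] by blast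
next
  assume "x \<otimes> inv y \<in> H"
  then have "x \<in> H #> y" using subgroup.rcos_module_rev[OF assms(1) is_group assms(3,2)] by blast
  then show "H #> x = H #> y" using repr_independence[OF _ assms(3,1)] by simp
qed

lemma comm_from_cm:
  assumes "x \<in> carrier G" "y \<in> carrier G" "cm G x y = \<one>"
  shows "x \<otimes> y = y \<otimes> x"
proof -
  have "cm G x y \<otimes> (y \<otimes> x) = x \<otimes> y"
    using assms(1,2) by (simp add: cm_def m_assoc)
  then show ?thesis using assms by simp
qed

lemma pow_comm_central:
  assumes "c \<in> carrier G" "z \<in> carrier G" "c \<otimes> z = z \<otimes> c"
  shows "c [^] (n::nat) \<otimes> z = z \<otimes> c [^] n"
proof (induction n)
  case 0 then show ?case using assms by simp
next
  case (Suc n)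
  have "c [^] Suc n \<otimes> z = c [^] n \<otimes> (c \<otimes> z)" using assms by (simp add: m_assoc)
  also have "\<dots> = (c [^] n \<otimes> z) \<otimes> c" using assms by (simp add: m_assoc)
  also have "\<dots> = z \<otimes> c [^] Suc n" using Suc assms by (simp add: m_assoc)
  finally show ?case .
qed

lemma cm_central_left:
  assumes m: "m \<in> carrier G" and B: "B \<in> carrier G" and Y: "Y \<in> carrier G"
    and cen: "\<And>z. z \<in> carrier G \<Longrightarrow> m \<otimes> z = z \<otimes> m"
  shows "cm G (m \<otimes> B) Y = cm G B Y"
proof -
  have e: "m \<otimes> (B \<otimes> Y \<otimes> inv B) = (B \<otimes> Y \<otimes> inv B) \<otimes> m" using cen B Y by simp
  have "cm G (m \<otimes> B) Y = (m \<otimes> (B \<otimes> Y \<otimes> inv B)) \<otimes> inv m \<otimes> inv Y"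
    using m B Y by (simp add: cm_def m_assoc inv_mult_group)
  also have "\<dots> = (B \<otimes> Y \<otimes> inv B) \<otimes> (m \<otimes> inv m) \<otimes> inv Y"
    unfolding e using m B Y by (simp add: m_assoc)
  also have "\<dots> = cm G B Y" using m B Y by (simp add: cm_def)
  finally show ?thesis .
qed

lemma cm_pow:
  assumes A: "A \<in> carrier G" and Y: "Y \<in> carrier G"
    and cen: "\<And>z. z \<in> carrier G \<Longrightarrow> cm G A Y \<otimes> z = z \<otimes> cm G A Y"
  shows "cm G (A [^] (n::nat)) Y = cm G A Y [^] n"
proof -
  define C where "C = cm G A Y"
  have C: "C \<in> carrier G" using A Y by (simp add: C_def)
  have AY: "A \<otimes> Y \<otimes> inv A = C \<otimes> Y" using A Y by (simp add: C_def cm_def m_assoc)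
  have key: "A [^] n \<otimes> Y \<otimes> inv (A [^] n) = C [^] n \<otimes> Y" for n :: nat
  proof (induction n)
    case 0 then show ?case using Y by simp
  next
    case (Suc n)
    have "A [^] Suc n \<otimes> Y \<otimes> inv (A [^] Suc n) = A [^] n \<otimes> (A \<otimes> Y \<otimes> inv A) \<otimes> inv (A [^] n)"
      using A Y by (simp add: m_assoc inv_mult_group)
    also have "\<dots> = A [^] n \<otimes> (C \<otimes> Y) \<otimes> inv (A [^] n)" by (simp add: AY)
    also have "\<dots> = (A [^] n \<otimes> C) \<otimes> Y \<otimes> inv (A [^] n)" using A Y C by (simp add: m_assoc)
    also have "\<dots> = (C \<otimes> A [^] n) \<otimes> Y \<otimes> inv (A [^] n)" using cen[of "A [^] n"] A by (simp add: C_def)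
    also have "\<dots> = C \<otimes> (A [^] n \<otimes> Y \<otimes> inv (A [^] n))" using A Y C by (simp add: m_assoc)
    also have "\<dots> = C \<otimes> (C [^] n \<otimes> Y)" by (simp add: Suc)
    also have "\<dots> = C [^] Suc n \<otimes> Y" by (metis C Y m_assoc nat_pow_closed nat_pow_Suc2)
    finally show ?case .
  qed
  have "cm G (A [^] n) Y = (A [^] n \<otimes> Y \<otimes> inv (A [^] n)) \<otimes> inv Y" using A Y by (simp add: cm_def)
  also have "\<dots> = C [^] n" using key C Y by (simp add: m_assoc)
  finally show ?thesis by (simp add: C_def)
qed

lemma mod_hom: "M \<lhd> G \<Longrightarrow> group_hom G (G Mod M) (\<lambda>x. M #> x)"
  unfolding group_hom_def group_hom_axioms_def
  using normal.factorgroup_is_group normal.r_coset_hom_Mod is_group by blast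

lemma mod_cm:
  assumes "M \<lhd> G" "x \<in> carrier G" "y \<in> carrier G"
  shows "M #> cm G x y = cm (G Mod M) (M #> x) (M #> y)"
proof -
  interpret h: group_hom G "G Mod M" "\<lambda>x. M #> x" by (rule mod_hom[OF assms(1)])
  show ?thesis using assms by (simp add: cm_def)
qed

lemma mod_eq_iff:
  assumes "M \<lhd> G" "x \<in> carrier G" "y \<in> carrier G"
  shows "(M #> x = M #> y) \<longleftrightarrow> x \<otimes> inv y \<in> M"
  using rcos_eq_iff[OF normal_imp_subgroup[OF assms(1)] assms(2,3)] .

lemma mod_one_iff:
  assumes "M \<lhd> G" "x \<in> carrier G"
  shows "(M #> x = M) \<longleftrightarrow> x \<in> M"
  using mod_eq_iff[OF assms one_closed] assms coset_join2[of \<one> M] normal_imp_subgroup[OF assms(1)]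
  by (metis coset_mult_one inv_one one_closed r_one subgroup.subset)

lemma mod_central:
  assumes M: "M \<lhd> G" and u: "u \<in> carrier G" and z: "z \<in> carrier G" and c: "cm G u z \<in> M"
  shows "(M #> u) \<otimes>\<^bsub>G Mod M\<^esub> (M #> z) = (M #> z) \<otimes>\<^bsub>G Mod M\<^esub> (M #> u)"
proof -
  interpret h: group_hom G "G Mod M" "\<lambda>x. M #> x" by (rule mod_hom[OF M])
  have "cm (G Mod M) (M #> u) (M #> z) = \<one>\<^bsub>G Mod M\<^esub>"
    using mod_cm[OF M u z] mod_one_iff[OF M cm_closed[OF u z]] c by simp
  then show ?thesis using h.H.comm_from_cm[OF h.hom_closed[OF u] h.hom_closed[OF z]] by simp
qed

lemma mod_pow_mult:
  assumes M: "M \<lhd> G" and a: "a \<in> carrier G" and z: "z \<in> carrier G"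
    and cen: "\<And>y. y \<in> carrier G \<Longrightarrow> cm G a y \<in> M"
  shows "M #> ((a \<otimes> z) [^] (n::nat)) = M #> (a [^] n \<otimes> z [^] n)"
proof -
  interpret h: group_hom G "G Mod M" "\<lambda>x. M #> x" by (rule mod_hom[OF M])
  have c: "(M #> a) \<otimes>\<^bsub>G Mod M\<^esub> (M #> z) = (M #> z) \<otimes>\<^bsub>G Mod M\<^esub> (M #> a)"
    using mod_central[OF M a z cen[OF z]] .
  have "M #> ((a \<otimes> z) [^] n) = ((M #> a) \<otimes>\<^bsub>G Mod M\<^esub> (M #> z)) [^]\<^bsub>G Mod M\<^esub> n"
    using a z by (simp add: h.hom_nat_pow)
  also have "\<dots> = (M #> a) [^]\<^bsub>G Mod M\<^esub> n \<otimes>\<^bsub>G Mod M\<^esub> (M #> z) [^]\<^bsub>G Mod M\<^esub> n"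
    using h.H.pow_mult_distrib[OF c h.hom_closed[OF a] h.hom_closed[OF z]] .
  also have "\<dots> = M #> (a [^] n \<otimes> z [^] n)"
    using a z by (simp add: h.hom_nat_pow)
  finally show ?thesis .
qed

lemma mod_conj_central:
  assumes M: "M \<lhd> G" and a: "a \<in> carrier G" and g: "g \<in> carrier G"
    and cen: "\<And>y. y \<in> carrier G \<Longrightarrow> cm G a y \<in> M"
  shows "M #> (g \<otimes> a [^] (n::nat) \<otimes> inv g) = M #> (a [^] n)"
proof -
  interpret h: group_hom G "G Mod M" "\<lambda>x. M #> x" by (rule mod_hom[OF M])
  have c: "(M #> a) \<otimes>\<^bsub>G Mod M\<^esub> (M #> g) = (M #> g) \<otimes>\<^bsub>G Mod M\<^esub> (M #> a)"
    using mod_central[OF M a g cen[OF g]] .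
  have c2: "(M #> a) [^]\<^bsub>G Mod M\<^esub> n \<otimes>\<^bsub>G Mod M\<^esub> (M #> g) = (M #> g) \<otimes>\<^bsub>G Mod M\<^esub> (M #> a) [^]\<^bsub>G Mod M\<^esub> n"
    using h.H.pow_comm_central[OF h.hom_closed[OF a] h.hom_closed[OF g] c] .
  have "M #> (g \<otimes> a [^] n \<otimes> inv g) = (M #> g) \<otimes>\<^bsub>G Mod M\<^esub> (M #> a) [^]\<^bsub>G Mod M\<^esub> n \<otimes>\<^bsub>G Mod M\<^esub> inv\<^bsub>G Mod M\<^esub> (M #> g)"
    using a g by (simp add: h.hom_nat_pow)
  also have "\<dots> = (M #> a) [^]\<^bsub>G Mod M\<^esub> n"
    using c2[symmetric] h.hom_closed[OF a] h.hom_closed[OF g]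
    by (simp add: h.H.m_assoc del: mult_FactGroup one_FactGroup)
  also have "\<dots> = M #> (a [^] n)" using a by (simp add: h.hom_nat_pow)
  finally show ?thesis .
qed

end

definition modpow :: "('a, 'b) monoid_scheme \<Rightarrow> 'a set \<Rightarrow> 'a set \<Rightarrow> nat \<Rightarrow> 'a set" where
  "modpow G M A q = {x \<in> carrier G. \<exists>a\<in>A. M #>\<^bsub>G\<^esub> x = M #>\<^bsub>G\<^esub> (a [^]\<^bsub>G\<^esub> q)}"

context group begin

lemma modpow_normal:
  assumes M: "M \<lhd> G" and A: "subgroup A G"
    and cen: "\<And>a y. a \<in> A \<Longrightarrow> y \<in> carrier G \<Longrightarrow> cm G a y \<in> M"
  shows "modpow G M A q \<lhd> G"
proof -
  interpret h: group_hom G "G Mod M" "\<lambda>x. M #> x" by (rule mod_hom[OF M])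
  have Ac: "a \<in> A \<Longrightarrow> a \<in> carrier G" for a using subgroup.mem_carrier[OF A] by simp
  have sub: "subgroup (modpow G M A q) G"
  proof (rule subgroupI)
    show "modpow G M A q \<subseteq> carrier G" unfolding modpow_def by auto
    show "modpow G M A q \<noteq> {}"
    proof -
      have "\<one> \<in> modpow G M A q" unfolding modpow_def
        using subgroup.one_closed[OF A] by force
      then show ?thesis by blast
    qed
  next
    fix x assume "x \<in> modpow G M A q"
    then obtain a where x: "x \<in> carrier G" "a \<in> A" "M #> x = M #> (a [^] q)" unfolding modpow_def by auto
    have "M #> inv x = inv\<^bsub>G Mod M\<^esub> (M #> (a [^] q))" using x by simp
    also have "\<dots> = M #> ((inv a) [^] q)" using x Ac by (simp add: nat_pow_inv)
    finally show "inv x \<in> modpow G M A q" unfolding modpow_def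
      using x subgroup.m_inv_closed[OF A] by auto
  next
    fix x y assume "x \<in> modpow G M A q" "y \<in> modpow G M A q"
    then obtain a b where x: "x \<in> carrier G" "a \<in> A" "M #> x = M #> (a [^] q)"
      and y: "y \<in> carrier G" "b \<in> A" "M #> y = M #> (b [^] q)" unfolding modpow_def by auto
    have "M #> (x \<otimes> y) = (M #> (a [^] q)) \<otimes>\<^bsub>G Mod M\<^esub> (M #> (b [^] q))" using x y by simp
    also have "\<dots> = M #> (a [^] q \<otimes> b [^] q)" using x y Ac by simp
    also have "\<dots> = M #> ((a \<otimes> b) [^] q)"
      using mod_pow_mult[OF M Ac[OF x(2)] Ac[OF y(2)]] cen x(2) by simp
    finally show "x \<otimes> y \<in> modpow G M A q" unfolding modpow_def
      using x y subgroup.m_closed[OF A] by auto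
  qed
  show ?thesis unfolding normal_inv_iff
  proof (intro conjI ballI sub)
    fix g x assume g: "g \<in> carrier G" and "x \<in> modpow G M A q"
    then obtain a where x: "x \<in> carrier G" "a \<in> A" "M #> x = M #> (a [^] q)" unfolding modpow_def by auto
    have "M #> (g \<otimes> x \<otimes> inv g) = (M #> g) \<otimes>\<^bsub>G Mod M\<^esub> (M #> (a [^] q)) \<otimes>\<^bsub>G Mod M\<^esub> inv\<^bsub>G Mod M\<^esub> (M #> g)"
      using x g by simp
    also have "\<dots> = M #> (g \<otimes> a [^] q \<otimes> inv g)" using x g Ac by simp
    also have "\<dots> = M #> (a [^] q)" using mod_conj_central[OF M Ac[OF x(2)] g] cen x(2) by simp
    finally show "g \<otimes> x \<otimes> inv g \<in> modpow G M A q" unfolding modpow_def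
      using x g by auto
  qed
qed

lemma lcs_modpow_normal: "modpow G (lcs G (Suc k)) (lcs G k) q \<lhd> G"
  by (rule modpow_normal[OF lcs_normal lcs_subgroup cm_in])

lemma gp_subgroup: "subgroup (gp G q) G"
  unfolding gp_def by (rule generate_is_subgroup) auto

lemma r_coset_consistent: "r_coset (G\<lparr>carrier := H\<rparr>) = r_coset G"
  by (simp add: r_coset_def fun_eq_iff)

lemma cm_consistent: "subgroup H G \<Longrightarrow> x \<in> H \<Longrightarrow> y \<in> H \<Longrightarrow> cm (G\<lparr>carrier := H\<rparr>) x y = cm G x y"
  by (simp add: cm_def)

lemma central_in_mod:
  assumes M: "M \<lhd> G" and m: "m \<in> carrier G" and cen: "\<And>w. w \<in> carrier G \<Longrightarrow> cm G m w \<in> M"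
  shows "\<And>z. z \<in> carrier (G Mod M) \<Longrightarrow> (M #> m) \<otimes>\<^bsub>G Mod M\<^esub> z = z \<otimes>\<^bsub>G Mod M\<^esub> (M #> m)"
proof -
  fix z assume "z \<in> carrier (G Mod M)"
  then obtain w where w: "w \<in> carrier G" "z = M #> w" by (auto simp: carrier_FactGroup)
  show "(M #> m) \<otimes>\<^bsub>G Mod M\<^esub> z = z \<otimes>\<^bsub>G Mod M\<^esub> (M #> m)"
    using mod_central[OF M m w(1) cen[OF w(1)]] w(2) by simp
qed

lemma lcs_bound:
  "lcs (G\<lparr>carrier := gp G q\<rparr>) k \<subseteq> modpow G (lcs G (Suc k)) (lcs G k) q"
proof (induction k)
  case 0
  have "gp G q \<subseteq> modpow G (lcs G (Suc 0)) (lcs G 0) q"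
    unfolding gp_def
  proof (rule generate_subgroup_incl)
    show "subgroup (modpow G (lcs G (Suc 0)) (lcs G 0) q) G"
      by (rule normal_imp_subgroup[OF lcs_modpow_normal])
    show "{x [^] q |x. x \<in> carrier G} \<subseteq> modpow G (lcs G (Suc 0)) (lcs G 0) q"
      unfolding modpow_def lcs_0 by auto
  qed
  then show ?case by (simp add: lcs_0)
next
  case (Suc k)
  define H where "H = gp G q"
  have sgH: "subgroup H G" unfolding H_def by (rule gp_subgroup)
  interpret G': group "G\<lparr>carrier := H\<rparr>" by (rule subgroup.subgroup_is_group[OF sgH is_group])
  have lk: "lcs (G\<lparr>carrier := H\<rparr>) k \<subseteq> H" using G'.lcs_sub by simp
  define K where "K = {cm G x y | x y. x \<in> lcs (G\<lparr>carrier := H\<rparr>) k \<and> y \<in> H}"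
  have cmH: "cm G x y \<in> H" if "x \<in> H" "y \<in> H" for x y
  proof -
    have "inv x \<in> H" "inv y \<in> H" using that subgroup.m_inv_closed[OF sgH] by auto
    then show ?thesis unfolding cm_def using that subgroup.m_closed[OF sgH] by metis
  qed
  have KH: "K \<subseteq> H" unfolding K_def using lk cmH by blast
  have eqK: "{cm (G\<lparr>carrier := H\<rparr>) x y | x y. x \<in> lcs (G\<lparr>carrier := H\<rparr>) k \<and> y \<in> carrier (G\<lparr>carrier := H\<rparr>)} = K"
  proof -
    have "cm (G\<lparr>carrier := H\<rparr>) x y = cm G x y" if "x \<in> lcs (G\<lparr>carrier := H\<rparr>) k" "y \<in> H" for x y
      using cm_consistent[OF sgH] that lk by blast
    note eq = this
    show ?thesis
    proof (intro equalityI subsetI)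
      fix c assume "c \<in> {cm (G\<lparr>carrier := H\<rparr>) x y | x y. x \<in> lcs (G\<lparr>carrier := H\<rparr>) k \<and> y \<in> carrier (G\<lparr>carrier := H\<rparr>)}"
      then obtain x y where "c = cm (G\<lparr>carrier := H\<rparr>) x y" "x \<in> lcs (G\<lparr>carrier := H\<rparr>) k" "y \<in> H" by auto
      then show "c \<in> K" using eq unfolding K_def by auto
    next
      fix c assume "c \<in> K"
      then obtain x y where "c = cm G x y" "x \<in> lcs (G\<lparr>carrier := H\<rparr>) k" "y \<in> H" unfolding K_def by auto
      then show "c \<in> {cm (G\<lparr>carrier := H\<rparr>) x y | x y. x \<in> lcs (G\<lparr>carrier := H\<rparr>) k \<and> y \<in> carrier (G\<lparr>carrier := H\<rparr>)}"
        using eq by force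
    qed
  qed
  have "lcs (G\<lparr>carrier := H\<rparr>) (Suc k) = generate G K"
    unfolding lcs_Suc eqK using generate_consistent[OF KH sgH] .
  also have "\<dots> \<subseteq> modpow G (lcs G (Suc (Suc k))) (lcs G (Suc k)) q"
  proof (rule generate_subgroup_incl)
    show "subgroup (modpow G (lcs G (Suc (Suc k))) (lcs G (Suc k)) q) G"
      by (rule normal_imp_subgroup[OF lcs_modpow_normal])
    show "K \<subseteq> modpow G (lcs G (Suc (Suc k))) (lcs G (Suc k)) q"
    proof
      fix c assume "c \<in> K"
      then obtain x y where c: "c = cm G x y" and x: "x \<in> lcs (G\<lparr>carrier := H\<rparr>) k" and y: "y \<in> H"
        unfolding K_def by auto
      have yc: "y \<in> carrier G" using subgroup.mem_carrier[OF sgH y] .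
      have "x \<in> modpow G (lcs G (Suc k)) (lcs G k) q" using Suc x unfolding H_def by blast
      then obtain a where xc: "x \<in> carrier G" and a: "a \<in> lcs G k"
        and xa: "lcs G (Suc k) #> x = lcs G (Suc k) #> (a [^] q)" unfolding modpow_def by auto
      have ac: "a \<in> carrier G" using a lcs_sub by auto
      define m where "m = x \<otimes> inv (a [^] q)"
      have m: "m \<in> lcs G (Suc k)" unfolding m_def
        using mod_eq_iff[OF lcs_normal xc] xa ac by simp
      have mc: "m \<in> carrier G" using m lcs_sub by auto
      have xm: "x = m \<otimes> a [^] q" unfolding m_def using xc ac by (simp add: m_assoc)
      define M2 where "M2 = lcs G (Suc (Suc k))"
      have M2: "M2 \<lhd> G" unfolding M2_def by (rule lcs_normal)
      interpret h: group_hom G "G Mod M2" "\<lambda>x. M2 #> x" by (rule mod_hom[OF M2])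
      have cay: "cm G a y \<in> lcs G (Suc k)" by (rule cm_in[OF a yc])
      have caycar: "cm G a y \<in> carrier G" using ac yc by simp
      have cen_m: "\<And>z. z \<in> carrier (G Mod M2) \<Longrightarrow> (M2 #> m) \<otimes>\<^bsub>G Mod M2\<^esub> z = z \<otimes>\<^bsub>G Mod M2\<^esub> (M2 #> m)"
        by (rule central_in_mod[OF M2 mc]) (simp add: M2_def cm_in[OF m])
      have cen_c: "\<And>z. z \<in> carrier (G Mod M2) \<Longrightarrow> (M2 #> cm G a y) \<otimes>\<^bsub>G Mod M2\<^esub> z = z \<otimes>\<^bsub>G Mod M2\<^esub> (M2 #> cm G a y)"
        by (rule central_in_mod[OF M2 caycar]) (simp add: M2_def cm_in[OF cay])
      have cen_c': "\<And>z. z \<in> carrier (G Mod M2) \<Longrightarrow> cm (G Mod M2) (M2 #> a) (M2 #> y) \<otimes>\<^bsub>G Mod M2\<^esub> z = z \<otimes>\<^bsub>G Mod M2\<^esub> cm (G Mod M2) (M2 #> a) (M2 #> y)"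
        using cen_c mod_cm[OF M2 ac yc] by simp
      have "M2 #> c = cm (G Mod M2) ((M2 #> m) \<otimes>\<^bsub>G Mod M2\<^esub> (M2 #> a) [^]\<^bsub>G Mod M2\<^esub> q) (M2 #> y)"
        unfolding c xm using mod_cm[OF M2 _ yc] mc ac by (simp add: h.hom_nat_pow del: mult_FactGroup)
      also have "\<dots> = cm (G Mod M2) ((M2 #> a) [^]\<^bsub>G Mod M2\<^esub> q) (M2 #> y)"
        by (rule h.H.cm_central_left) (use mc ac yc cen_m in auto)
      also have "\<dots> = cm (G Mod M2) (M2 #> a) (M2 #> y) [^]\<^bsub>G Mod M2\<^esub> q"
        by (rule h.H.cm_pow) (use ac yc cen_c' in auto)
      also have "\<dots> = M2 #> (cm G a y [^] q)"
        using mod_cm[OF M2 ac yc] caycar by (simp add: h.hom_nat_pow)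
      finally have "M2 #> c = M2 #> (cm G a y [^] q)" .
      then show "c \<in> modpow G (lcs G (Suc (Suc k))) (lcs G (Suc k)) q"
        unfolding modpow_def M2_def using cay c xc yc by auto
    qed
  qed
  finally show ?case unfolding H_def .
qed

lemma modpow_mono:
  assumes N: "N \<lhd> G" and M: "M \<lhd> G" and NM: "N \<subseteq> M" and A: "A \<subseteq> carrier G"
  shows "modpow G N A q \<subseteq> modpow G M A q"
proof
  fix x assume "x \<in> modpow G N A q"
  then obtain a where x: "x \<in> carrier G" "a \<in> A" "N #> x = N #> (a [^] q)" unfolding modpow_def by auto
  have True: "a \<in> carrier G" using x(2) A by auto
  have "x \<otimes> inv (a [^] q) \<in> N" using iffD1[OF mod_eq_iff[OF N x(1) nat_pow_closed[OF True]] x(3)] .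
  then have "M #> x = M #> (a [^] q)" using mod_eq_iff[OF M x(1) nat_pow_closed[OF True]] NM by auto
  then show "x \<in> modpow G M A q" unfolding modpow_def using x by auto
qed

end

context group begin

lemma phi_base:
  assumes M: "M \<lhd> G" and "lcs G 0 \<subseteq> M" and "g \<in> gp G (q ^ 0)"
  shows "\<exists>z\<in>carrier G. M #> g = M #> (z [^] q)"
proof -
  have sgM: "subgroup M G" by (rule normal_imp_subgroup[OF M])
  have "g \<in> carrier G" using assms(3) subgroup.mem_carrier[OF gp_subgroup] by simp
  then have gM: "g \<in> M" using assms(2) by (simp add: lcs_0 subset_iff)
  have "M #> g = M" by (rule subgroup.rcos_const[OF sgM is_group gM])
  moreover have "M #> (\<one> [^] q) = M" using subgroup.subset[OF sgM] by simp
  ultimately show ?thesis by (metis one_closed)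
qed

lemma phi_step:
  assumes IH: "\<And>M' g. M' \<lhd> G\<lparr>carrier := gp G q\<rparr> \<Longrightarrow> lcs (G\<lparr>carrier := gp G q\<rparr>) c \<subseteq> M' \<Longrightarrow>
     g \<in> gp (G\<lparr>carrier := gp G q\<rparr>) (q ^ c) \<Longrightarrow>
     \<exists>z\<in>carrier (G\<lparr>carrier := gp G q\<rparr>). M' #>\<^bsub>G\<lparr>carrier := gp G q\<rparr>\<^esub> g = M' #>\<^bsub>G\<lparr>carrier := gp G q\<rparr>\<^esub> (z [^]\<^bsub>G\<lparr>carrier := gp G q\<rparr>\<^esub> q)"
  and M: "M \<lhd> G" and lM: "lcs G (Suc c) \<subseteq> M" and gG: "g \<in> gp G (q ^ Suc c)"
  shows "\<exists>z\<in>carrier G. M #> g = M #> (z [^] q)"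
proof -
  define H where "H = gp G q"
  have sgH: "subgroup H G" unfolding H_def by (rule gp_subgroup)
  interpret G': group "G\<lparr>carrier := H\<rparr>" by (rule subgroup.subgroup_is_group[OF sgH is_group])
  define T where "T = modpow G M (lcs G c) q"
  have cenT: "cm G a y \<in> M" if "a \<in> lcs G c" "y \<in> carrier G" for a y
    using cm_in[OF that] lM by auto
  have nT: "T \<lhd> G" unfolding T_def by (rule modpow_normal[OF M lcs_subgroup cenT])
  have sgT: "subgroup T G" by (rule normal_imp_subgroup[OF nT])
  define M' where "M' = H \<inter> T"
  have sgM'G: "subgroup M' G" unfolding M'_def by (rule subgroups_Inter_pair[OF sgH sgT])
  have sgM': "subgroup M' (G\<lparr>carrier := H\<rparr>)"
    by (rule subgroup_incl[OF sgM'G sgH]) (auto simp: M'_def)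
  have nM': "M' \<lhd> (G\<lparr>carrier := H\<rparr>)"
    unfolding G'.normal_inv_iff
  proof (intro conjI ballI sgM')
    fix x h assume x: "x \<in> carrier (G\<lparr>carrier := H\<rparr>)" and h: "h \<in> M'"
    have xH: "x \<in> H" using x by simp
    have xc: "x \<in> carrier G" using subgroup.mem_carrier[OF sgH xH] .
    have hH: "h \<in> H" and hT: "h \<in> T" using h by (auto simp: M'_def)
    have "inv\<^bsub>G\<lparr>carrier := H\<rparr>\<^esub> x = inv x" using m_inv_consistent[OF sgH xH] .
    moreover have "x \<otimes> h \<otimes> inv x \<in> H"
      using xH hH subgroup.m_closed[OF sgH] subgroup.m_inv_closed[OF sgH] by metis
    moreover have "x \<otimes> h \<otimes> inv x \<in> T" using normal.inv_op_closed2[OF nT xc hT] .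
    ultimately show "x \<otimes>\<^bsub>G\<lparr>carrier := H\<rparr>\<^esub> h \<otimes>\<^bsub>G\<lparr>carrier := H\<rparr>\<^esub> inv\<^bsub>G\<lparr>carrier := H\<rparr>\<^esub> x \<in> M'"
      by (simp add: M'_def)
  qed
  have lb: "lcs (G\<lparr>carrier := H\<rparr>) c \<subseteq> M'"
  proof -
    have "lcs (G\<lparr>carrier := H\<rparr>) c \<subseteq> H" using G'.lcs_sub by simp
    moreover have "lcs (G\<lparr>carrier := H\<rparr>) c \<subseteq> T"
      using lcs_bound[of q c] modpow_mono[OF lcs_normal M lM lcs_sub[of c], of q]
      unfolding H_def T_def by blast
    ultimately show ?thesis by (auto simp: M'_def)
  qed
  have powH: "x [^] n \<in> H" if "x \<in> H" for x and n :: nat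
    using G'.nat_pow_closed[of x n] that nat_pow_consistent[of x n H] by simp
  have gen_eq: "gp (G\<lparr>carrier := H\<rparr>) (q ^ c) = generate G {x [^] (q ^ c) | x. x \<in> H}"
  proof -
    have "{x [^]\<^bsub>G\<lparr>carrier := H\<rparr>\<^esub> (q ^ c) | x. x \<in> carrier (G\<lparr>carrier := H\<rparr>)} = {x [^] (q ^ c) | x. x \<in> H}"
      using nat_pow_consistent by simp
    moreover have "{x [^] (q ^ c) | x. x \<in> H} \<subseteq> H" using powH by auto
    ultimately show ?thesis unfolding gp_def using generate_consistent[OF _ sgH] by simp
  qed
  have gmem: "g \<in> gp (G\<lparr>carrier := H\<rparr>) (q ^ c)"
  proof -
    have "gp G (q ^ Suc c) \<subseteq> generate G {x [^] (q ^ c) | x. x \<in> H}"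
      unfolding gp_def
    proof (rule generate_subgroup_incl)
      have "{x [^] (q ^ c) | x. x \<in> H} \<subseteq> carrier G" using powH subgroup.subset[OF sgH] by auto
      then show "subgroup (generate G {x [^] (q ^ c) | x. x \<in> H}) G" by (rule generate_is_subgroup)
      show "{x [^] q ^ Suc c |x. x \<in> carrier G} \<subseteq> generate G {x [^] q ^ c |x. x \<in> H}"
      proof
        fix y assume "y \<in> {x [^] q ^ Suc c |x. x \<in> carrier G}"
        then obtain x where x: "x \<in> carrier G" "y = x [^] (q ^ Suc c)" by auto
        have "y = (x [^] q) [^] (q ^ c)" using x by (simp add: nat_pow_pow)
        moreover have "x [^] q \<in> H" unfolding H_def gp_def using x by (auto intro: generate.incl)
        ultimately show "y \<in> generate G {x [^] q ^ c |x. x \<in> H}" by (auto intro: generate.incl)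
      qed
    qed
    then show ?thesis using gG gen_eq by auto
  qed
  obtain z where zH: "z \<in> H" and zeq: "M' #> g = M' #> (z [^] q)"
    using IH[folded H_def, OF nM' lb gmem] r_coset_consistent nat_pow_consistent by auto
  have zc: "z \<in> carrier G" using subgroup.mem_carrier[OF sgH zH] .
  have gc: "g \<in> carrier G" using gG subgroup.mem_carrier[OF gp_subgroup] by simp
  have "g \<otimes> inv (z [^] q) \<in> M'" using iffD1[OF rcos_eq_iff[OF sgM'G gc nat_pow_closed[OF zc]] zeq] .
  then have "g \<otimes> inv (z [^] q) \<in> T" by (simp add: M'_def)
  then obtain a where a: "a \<in> lcs G c" and aeq: "M #> (g \<otimes> inv (z [^] q)) = M #> (a [^] q)"
    unfolding T_def modpow_def by auto
  have ac: "a \<in> carrier G" using a lcs_sub by auto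
  interpret h: group_hom G "G Mod M" "\<lambda>x. M #> x" by (rule mod_hom[OF M])
  have "M #> g = M #> ((g \<otimes> inv (z [^] q)) \<otimes> z [^] q)" using gc zc by (simp add: m_assoc)
  also have "\<dots> = (M #> (g \<otimes> inv (z [^] q))) \<otimes>\<^bsub>G Mod M\<^esub> (M #> (z [^] q))"
    using gc zc by (simp del: mult_FactGroup)
  also have "\<dots> = (M #> (a [^] q)) \<otimes>\<^bsub>G Mod M\<^esub> (M #> (z [^] q))" by (simp only: aeq)
  also have "\<dots> = M #> (a [^] q \<otimes> z [^] q)" using ac zc by (simp del: mult_FactGroup)
  also have "\<dots> = M #> ((a \<otimes> z) [^] q)"
    using mod_pow_mult[OF M ac zc] cenT a by simp
  finally show ?thesis using ac zc by blast
qed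

end

lemma phi:
  assumes "group G" "M \<lhd> G" "lcs G c \<subseteq> M" "g \<in> gp G (q ^ c)"
  shows "\<exists>z\<in>carrier G. M #>\<^bsub>G\<^esub> g = M #>\<^bsub>G\<^esub> (z [^]\<^bsub>G\<^esub> q)"
  using assms
proof (induction c arbitrary: G M g)
  case 0
  show ?case by (rule group.phi_base[OF 0(1) 0(2) 0(3) 0(4)])
next
  case (Suc c)
  have grp: "group (G\<lparr>carrier := gp G q\<rparr>)"
    using subgroup.subgroup_is_group[OF group.gp_subgroup[OF Suc.prems(1)] Suc.prems(1)] .
  show ?case
    by (rule group.phi_step[OF Suc.prems(1) Suc.IH[OF grp] Suc.prems(2-4)])
qed

context group begin

end

lemma ih_iff:
  assumes "monoid G" "x \<in> carrier G"
  shows "infinite_height G p x \<longleftrightarrow> (\<forall>n. \<exists>h\<in>carrier G. x = h [^]\<^bsub>G\<^esub> (p ^ n))"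
proof
  assume A: "\<forall>n. \<exists>h\<in>carrier G. x = h [^]\<^bsub>G\<^esub> (p ^ n)"
  show "infinite_height G p x" unfolding infinite_height_def
  proof
    assume "\<exists>n. (\<exists>h\<in>carrier G. x = h [^]\<^bsub>G\<^esub> (p ^ n)) \<and> (\<forall>m. (\<exists>h\<in>carrier G. x = h [^]\<^bsub>G\<^esub> (p ^ m)) \<longrightarrow> m \<le> n)"
    then obtain n where "\<forall>m. (\<exists>h\<in>carrier G. x = h [^]\<^bsub>G\<^esub> (p ^ m)) \<longrightarrow> m \<le> n" by blast
    then have "Suc n \<le> n" using A by blast
    then show False by simp
  qed
next
  assume I: "infinite_height G p x"
  define P where "P = (\<lambda>m. \<exists>h\<in>carrier G. x = h [^]\<^bsub>G\<^esub> (p ^ m))"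
  show "\<forall>n. P n" unfolding P_def[symmetric]
  proof (rule ccontr)
    assume "\<not> (\<forall>n. P n)"
    then obtain n0 where n0: "\<not> P n0" by blast
    have bnd: "\<forall>m. P m \<longrightarrow> m \<le> n0"
    proof (intro allI impI)
      fix m assume "P m"
      then obtain h where h: "h \<in> carrier G" "x = h [^]\<^bsub>G\<^esub> (p ^ m)" unfolding P_def by blast
      show "m \<le> n0"
      proof (rule ccontr)
        assume "\<not> m \<le> n0"
        then have "p ^ m = p ^ (m - n0) * p ^ n0" by (simp add: power_add[symmetric])
        then have "x = (h [^]\<^bsub>G\<^esub> (p ^ (m - n0))) [^]\<^bsub>G\<^esub> (p ^ n0)"
          using h monoid.nat_pow_pow[OF assms(1) h(1)] by simp
        moreover have "h [^]\<^bsub>G\<^esub> (p ^ (m - n0)) \<in> carrier G" using monoid.nat_pow_closed[OF assms(1) h(1)] .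
        ultimately show False using n0 unfolding P_def by blast
      qed
    qed
    have P0: "P 0" unfolding P_def
      using monoid.l_one[OF assms(1) assms(2)] assms(2) by (intro bexI[of _ x]) simp_all
    have "P (Greatest P)" using GreatestI_nat[of P 0 n0] P0 bnd by blast
    moreover have "\<forall>m. P m \<longrightarrow> m \<le> Greatest P" using Greatest_le_nat[of P _ n0] bnd by blast
    ultimately show False using I unfolding infinite_height_def P_def by blast
  qed
qed

context group begin

lemma conj_pow:
  assumes "x \<in> carrier G" "h \<in> carrier G"
  shows "x \<otimes> h [^] (n::nat) \<otimes> inv x = (x \<otimes> h \<otimes> inv x) [^] n"
proof (induction n)
  case 0 then show ?case using assms by simp
next
  case (Suc n)
  have "x \<otimes> h [^] Suc n \<otimes> inv x = (x \<otimes> h [^] n \<otimes> inv x) \<otimes> (x \<otimes> h \<otimes> inv x)"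
    using assms by (simp add: m_assoc)
  also have "\<dots> = (x \<otimes> h \<otimes> inv x) [^] Suc n" by (simp add: Suc)
  finally show ?case .
qed

end

context group begin

lemma pow_cor:
  assumes "lcs G c = {\<one>}" "g \<in> gp G (q ^ c)"
  shows "\<exists>z\<in>carrier G. g = z [^] q"
proof -
  obtain z where z: "z \<in> carrier G" "{\<one>} #> g = {\<one>} #> (z [^] q)"
    using phi[OF is_group one_is_normal _ assms(2)] assms(1) by auto
  have gc: "g \<in> carrier G" using assms(2) subgroup.mem_carrier[OF gp_subgroup] by simp
  have "{g} = {z [^] q}" using z gc by (simp add: r_coset_def)
  then show ?thesis using z by auto
qed

lemma main_in:
  fixes p :: nat
  assumes c: "lcs G c = {\<one>}"
  defines "G0 \<equiv> {g \<in> carrier G. infinite_height G p g}"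
  shows "G0 \<lhd> G \<and>
         (\<forall>x \<in> carrier (G Mod G0). infinite_height (G Mod G0) p x \<longrightarrow> x = \<one>\<^bsub>G Mod G0\<^esub>)"
proof -
  have G0: "G0 = {g \<in> carrier G. \<forall>n. \<exists>h\<in>carrier G. g = h [^] (p ^ n)}"
    unfolding G0_def using ih_iff[OF is_monoid] by blast
  have prod: "\<exists>z\<in>carrier G. u [^] (p ^ (n * c)) \<otimes> v [^] (p ^ (n * c)) = z [^] (p ^ n)"
    if "u \<in> carrier G" "v \<in> carrier G" for u v n
  proof -
    have e: "p ^ (n * c) = (p ^ n) ^ c" by (simp add: power_mult)
    have "u [^] (p ^ (n * c)) \<otimes> v [^] (p ^ (n * c)) \<in> gp G ((p ^ n) ^ c)"
    proof -
      have "u [^] (p ^ (n * c)) \<in> {x [^] ((p ^ n) ^ c) | x. x \<in> carrier G}"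
           "v [^] (p ^ (n * c)) \<in> {x [^] ((p ^ n) ^ c) | x. x \<in> carrier G}"
        using that e by auto
      then show ?thesis unfolding gp_def by (intro generate.eng generate.incl)
    qed
    then show ?thesis using pow_cor[OF c] by blast
  qed
  have sub: "subgroup G0 G"
  proof (rule subgroupI)
    show "G0 \<subseteq> carrier G" unfolding G0 by auto
    have "\<one> \<in> G0" unfolding G0 by (auto intro: bexI[of _ \<one>])
    then show "G0 \<noteq> {}" by blast
  next
    fix a assume "a \<in> G0"
    then have a: "a \<in> carrier G" "\<And>n. \<exists>h\<in>carrier G. a = h [^] (p ^ n)" unfolding G0 by auto
    have "\<exists>h\<in>carrier G. inv a = h [^] (p ^ n)" for n
    proof -
      obtain h where "h \<in> carrier G" "a = h [^] (p ^ n)" using a(2) by blast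
      then show ?thesis by (intro bexI[of _ "inv h"]) (auto simp: nat_pow_inv)
    qed
    then show "inv a \<in> G0" unfolding G0 using a by auto
  next
    fix a b assume "a \<in> G0" "b \<in> G0"
    then have a: "a \<in> carrier G" "\<And>n. \<exists>h\<in>carrier G. a = h [^] (p ^ n)"
      and b: "b \<in> carrier G" "\<And>n. \<exists>h\<in>carrier G. b = h [^] (p ^ n)" unfolding G0 by auto
    have "\<exists>h\<in>carrier G. a \<otimes> b = h [^] (p ^ n)" for n
    proof -
      obtain u where u: "u \<in> carrier G" "a = u [^] (p ^ (n * c))" using a(2) by blast
      obtain v where v: "v \<in> carrier G" "b = v [^] (p ^ (n * c))" using b(2) by blast
      show ?thesis using prod[OF u(1) v(1), of n] u v by simp
    qed
    then show "a \<otimes> b \<in> G0" unfolding G0 using a b by auto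
  qed
  have nG0: "G0 \<lhd> G" unfolding normal_inv_iff
  proof (intro conjI ballI sub)
    fix x g assume x: "x \<in> carrier G" and "g \<in> G0"
    then have g: "g \<in> carrier G" "\<And>n. \<exists>h\<in>carrier G. g = h [^] (p ^ n)" unfolding G0 by auto
    have "\<exists>h\<in>carrier G. x \<otimes> g \<otimes> inv x = h [^] (p ^ n)" for n
    proof -
      obtain h where h: "h \<in> carrier G" "g = h [^] (p ^ n)" using g(2) by blast
      show ?thesis using conj_pow[OF x h(1)] h x by (intro bexI[of _ "x \<otimes> h \<otimes> inv x"]) auto
    qed
    then show "x \<otimes> g \<otimes> inv x \<in> G0" unfolding G0 using x g by auto
  qed
  interpret N: normal G0 G by (rule nG0)
  interpret Q: group "G Mod G0" by (rule N.factorgroup_is_group)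
  have quot: "Xq = \<one>\<^bsub>G Mod G0\<^esub>" if Xq: "Xq \<in> carrier (G Mod G0)" and ihXq: "infinite_height (G Mod G0) p Xq" for Xq
  proof -
    obtain g where g: "g \<in> carrier G" "Xq = G0 #> g" using Xq by (auto simp: carrier_FactGroup)
    have allX: "\<forall>n. \<exists>Y\<in>carrier (G Mod G0). Xq = Y [^]\<^bsub>G Mod G0\<^esub> (p ^ n)"
      using ih_iff[OF Q.is_monoid Xq] ihXq by blast
    have "\<exists>h\<in>carrier G. g = h [^] (p ^ n)" for n
    proof -
      obtain Y where Y: "Y \<in> carrier (G Mod G0)" "Xq = Y [^]\<^bsub>G Mod G0\<^esub> (p ^ (n * c))" using allX by blast
      obtain h where h: "h \<in> carrier G" "Y = G0 #> h" using Y(1) by (auto simp: carrier_FactGroup)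
      have "G0 #> g = G0 #> (h [^] (p ^ (n * c)))"
        using Y(2) h g N.FactGroup_pow[OF h(1)] by simp
      then have w: "g \<otimes> inv (h [^] (p ^ (n * c))) \<in> G0"
        using iffD1[OF rcos_eq_iff[OF sub g(1) nat_pow_closed[OF h(1)]]] by blast
      then obtain u where u: "u \<in> carrier G" "g \<otimes> inv (h [^] (p ^ (n * c))) = u [^] (p ^ (n * c))"
        unfolding G0 by blast
      have "g = u [^] (p ^ (n * c)) \<otimes> h [^] (p ^ (n * c))"
        using u(2)[symmetric] g(1) h(1) by (simp add: m_assoc)
      then show ?thesis using prod[OF u(1) h(1), of n] by simp
    qed
    then have "g \<in> G0" unfolding G0 using g by auto
    then show ?thesis using g N.rcos_const[OF is_group] by simp
  qed
  show ?thesis using nG0 quot by blast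
qed

end

theorem mainTheorem5:
  fixes G :: "('a, 'b) monoid_scheme" and p :: nat
  assumes "Factorial_Ring.prime p"
    and "nilpotent_group G"
    and "p_group G p"
  defines "G0 \<equiv> {g \<in> carrier G. infinite_height G p g}"
  shows "G0 \<lhd> G \<and>
         (\<forall>x \<in> carrier (G Mod G0). infinite_height (G Mod G0) p x \<longrightarrow> x = \<one>\<^bsub>G Mod G0\<^esub>)"
proof -
  have grp: "group G" using assms(2) by (simp add: nilpotent_group_def)
  obtain c where c: "lcs G c = {\<one>\<^bsub>G\<^esub>}" using assms(2) by (auto simp: nilpotent_group_def lcs_def)
  show ?thesis unfolding G0_def by (rule group.main_in[OF grp c])
qed

end
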